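(* Let $f:[0,1]\to\mathbb R$ be twice differentiable and suppose there exist constants $0<c_1<c_2$ with $c_1<|f''(x)|<c_2$ for all $x\in[0,1]$. Then $f$ satisfies the uniform nonlinearity (UN) condition.
   Context: For a positive integer $M$ and $k=0,\dots,M-1$ let $I_k=[k/M,(k+1)/M]$ and $m_k=\inf_{a,b\in\mathbb R}\max_{x\in I_k}|f(x)-ax-b|$. A function $f$ satisfies the UN condition if there exists $K>0$ such that for all sufficiently large $M$, $$M\max_{0\le k\le M-1}m_k^2\le K\sum_{k=0}^{M-1}m_k^2 .$$ *)

theory Defs
  imports "HOL-Analysis.Analysis"
begin

definition lin_err :: "(real \<Rightarrow> real) \<Rightarrow> nat \<Rightarrow> nat \<Rightarrow> real" where
  "lin_err f M k =
     (INF ab \<in> (UNIV :: (real \<times> real) set).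
        (SUP x \<in> {real k / real M .. (real k + 1) / real M}.
           \<bar>f x - fst ab * x - snd ab\<bar>))"

definition UN_condition :: "(real \<Rightarrow> real) \<Rightarrow> bool" where
  "UN_condition f \<longleftrightarrow>
     (\<exists>K>0. \<forall>\<^sub>F M in sequentially.
        real M * (MAX k \<in> {..<M}. (lin_err f M k)\<^sup>2)
          \<le> K * (\<Sum>k<M. (lin_err f M k)\<^sup>2))"

end

theory Submission
  imports Defs
begin

lemma mvt_int:
  fixes g g' :: "real \<Rightarrow> real"
  assumes "a < b" "continuous_on {a..b} g" "\<And>x. a < x \<Longrightarrow> x < b \<Longrightarrow> DERIV g x :> g' x"
  shows "\<exists>z. a < z \<and> z < b \<and> g b - g a = (b - a) * g' z"
proof -
  obtain l z where "a < z" "z < b" "DERIV g z :> l" "g b - g a = (b - a) * l"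
    using MVT[OF assms(1,2)] assms(3) real_differentiable_def by blast
  then show ?thesis using assms(3) DERIV_unique by blast
qed

context
  fixes f f' f'' :: "real \<Rightarrow> real" and c1 c2 :: real
  assumes contf: "continuous_on {0..1} f" and contf': "continuous_on {0..1} f'"
    and Df: "\<And>x. 0 < x \<Longrightarrow> x < 1 \<Longrightarrow> DERIV f x :> f' x"
    and Df': "\<And>x. 0 < x \<Longrightarrow> x < 1 \<Longrightarrow> DERIV f' x :> f'' x"
    and bnd: "\<And>x. x \<in> {0..1} \<Longrightarrow> c1 < \<bar>f'' x\<bar> \<and> \<bar>f'' x\<bar> < c2"
begin

lemma taylor_up:
  assumes "0 \<le> u" "u < v" "v \<le> 1" "u \<le> x" "x \<le> v"
  shows "\<bar>f x - f u - f' u * (x - u)\<bar> \<le> c2 * (v - u)^2"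
proof (cases "x = u")
  case True
  have "c1 < c2" using bnd[of 0] by auto
  moreover have "0 < c2" using bnd[of 0] by auto
  ultimately show ?thesis using True by simp
next
  case False
  hence ux: "u < x" using assms by auto
  have "continuous_on {u..x} f" by (rule continuous_on_subset[OF contf]) (use assms in auto)
  then obtain e where e: "u < e" "e < x" "f x - f u = (x - u) * f' e"
    using mvt_int[OF ux, of f f'] Df assms by auto
  have "continuous_on {u..e} f'" by (rule continuous_on_subset[OF contf']) (use assms e in auto)
  then obtain z where z: "u < z" "z < e" "f' e - f' u = (e - u) * f'' z"
    using mvt_int[OF e(1), of f' f''] Df' assms e by auto
  have "f x - f u - f' u * (x - u) = (x - u) * (f' e - f' u)"
    using e(3) by (simp add: algebra_simps)
  also have "\<dots> = (x - u) * (e - u) * f'' z" using z(3) by simp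
  finally have "f x - f u - f' u * (x - u) = (x - u) * (e - u) * f'' z" .
  also have "\<bar>\<dots>\<bar> = (x - u) * (e - u) * \<bar>f'' z\<bar>" using ux e by (simp add: abs_mult)
  also have "\<dots> \<le> (v - u) * (v - u) * c2"
  proof -
    have "\<bar>f'' z\<bar> < c2" using bnd[of z] z e assms by auto
    moreover have "(x - u) * (e - u) \<le> (v - u) * (v - u)"
      using assms e by (intro mult_mono) auto
    ultimately show ?thesis using ux e
      by (smt (verit, best) mult_mono mult_nonneg_nonneg)
  qed
  finally show ?thesis by (simp add: power2_eq_square algebra_simps)
qed

lemma second_diff:
  assumes "0 \<le> u" "u < v" "v \<le> 1"
  shows "c1 * ((v - u)/2)^2 < \<bar>f v + f u - 2 * f ((u + v)/2)\<bar>"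
proof -
  define m where "m = (u + v)/2"
  define h where "h = (v - u)/2"
  have h: "0 < h" using assms by (simp add: h_def)
  have mh: "m + h = v" "m - h = u" by (simp_all add: m_def h_def field_simps)
  define A where "A = (f v + f u - 2 * f m) / h^2"
  define psi where "psi t = f (m + t) + f (m - t) - 2 * f m - A * t^2" for t
  have "continuous_on {0..h} psi"
  proof -
    have c1': "continuous_on {0..h} (\<lambda>t. f (m + t))"
      by (rule continuous_on_compose2[OF contf]) (use mh assms in \<open>auto intro!: continuous_intros\<close>)
    have c2': "continuous_on {0..h} (\<lambda>t. f (m - t))"
      by (rule continuous_on_compose2[OF contf]) (use mh assms in \<open>auto intro!: continuous_intros\<close>)
    show ?thesis unfolding psi_def by (intro continuous_intros c1' c2')
  qed
  moreover have dpsi: "DERIV psi t :> f' (m + t) - f' (m - t) - 2 * A * t" if "0 < t" "t < h" for t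
  proof -
    have a: "DERIV (\<lambda>t. f (m + t)) t :> f' (m + t) * 1"
      by (rule DERIV_chain2[OF Df]) (use that mh assms in \<open>auto intro!: derivative_eq_intros\<close>)
    have b: "DERIV (\<lambda>t. f (m - t)) t :> f' (m - t) * (-1)"
      by (rule DERIV_chain2[OF Df]) (use that mh assms in \<open>auto intro!: derivative_eq_intros\<close>)
    have c: "DERIV (\<lambda>t. A * t^2) t :> 2 * A * t" by (auto intro!: derivative_eq_intros)
    have "DERIV (\<lambda>t. f (m + t) + f (m - t) - 2 * f m - A * t^2) t :> f' (m + t) * 1 + f' (m - t) * (-1) - 0 - 2 * A * t"
      by (intro DERIV_diff DERIV_add a b c DERIV_const)
    then show ?thesis unfolding psi_def by simp
  qed
  ultimately obtain xi where xi: "0 < xi" "xi < h" "psi h - psi 0 = (h - 0) * (f' (m + xi) - f' (m - xi) - 2 * A * xi)"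
    using mvt_int[OF h, of psi "\<lambda>t. f' (m + t) - f' (m - t) - 2 * A * t"] by blast
  have "A * h^2 = f v + f u - 2 * f m" unfolding A_def using h by simp
  hence "psi h = 0" unfolding psi_def using mh by simp
  moreover have "psi 0 = 0" unfolding psi_def by simp
  ultimately have "psi h = 0" "psi 0 = 0" by auto
  hence eq: "f' (m + xi) - f' (m - xi) = 2 * A * xi" using xi h by simp
  have lt: "m - xi < m + xi" using xi by simp
  have "continuous_on {m - xi..m + xi} f'" by (rule continuous_on_subset[OF contf']) (use mh xi assms in auto)
  then obtain z where z: "m - xi < z" "z < m + xi" "f' (m + xi) - f' (m - xi) = (m + xi - (m - xi)) * f'' z"
    using mvt_int[OF lt, of f' f''] Df' mh xi assms by auto
  have "A = f'' z" using eq z xi by (simp add: algebra_simps)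
  hence "c1 < \<bar>A\<bar>" using bnd[of z] z xi mh assms by auto
  hence "c1 * h^2 < \<bar>A\<bar> * h^2" using h by simp
  also have "\<bar>A\<bar> * h^2 = \<bar>f v + f u - 2 * f m\<bar>" using h unfolding A_def by (simp add: abs_div)
  finally show ?thesis unfolding m_def h_def .
qed


lemma bdd_g:
  assumes "0 \<le> u" "v \<le> 1"
  shows "bdd_above ((\<lambda>x. \<bar>f x - a * x - b\<bar>) ` {u..v})"
proof -
  have "continuous_on {u..v} f" by (rule continuous_on_subset[OF contf]) (use assms in auto)
  hence "continuous_on {u..v} (\<lambda>x. \<bar>f x - a * x - b\<bar>)" by (intro continuous_intros)
  hence "compact ((\<lambda>x. \<bar>f x - a * x - b\<bar>) ` {u..v})" by (intro compact_continuous_image) auto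
  thus ?thesis by (intro bounded_imp_bdd_above compact_imp_bounded)
qed

lemma sup_lower:
  assumes "0 \<le> u" "u < v" "v \<le> 1"
  shows "c1 * ((v - u)/2)^2 / 4 \<le> (SUP x \<in> {u..v}. \<bar>f x - a * x - b\<bar>)"
proof -
  let ?S = "SUP x \<in> {u..v}. \<bar>f x - a * x - b\<bar>"
  define m where "m = (u + v) / 2"
  have B: "bdd_above ((\<lambda>x. \<bar>f x - a * x - b\<bar>) ` {u..v})" using bdd_g assms by auto
  have "\<bar>f y - a * y - b\<bar> \<le> ?S" if "y \<in> {u..v}" for y
    by (rule cSUP_upper[OF that B])
  moreover have "m \<in> {u..v}" using assms by (simp add: m_def)
  ultimately have s: "\<bar>f u - a * u - b\<bar> \<le> ?S" "\<bar>f v - a * v - b\<bar> \<le> ?S" "\<bar>f m - a * m - b\<bar> \<le> ?S"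
    using assms by auto
  have "f v + f u - 2 * f m = (f v - a * v - b) + (f u - a * u - b) - 2 * (f m - a * m - b)"
    by (simp add: m_def algebra_simps)
  moreover have key: "\<And>p q r S::real. \<bar>p\<bar> \<le> S \<Longrightarrow> \<bar>q\<bar> \<le> S \<Longrightarrow> \<bar>r\<bar> \<le> S \<Longrightarrow> \<bar>p + q - 2*r\<bar> \<le> 4*S"
    by arith
  ultimately have "\<bar>f v + f u - 2 * f m\<bar> \<le> 4 * ?S" using key[OF s(2) s(1) s(3)] by simp
  moreover have "c1 * ((v - u)/2)^2 < \<bar>f v + f u - 2 * f m\<bar>" unfolding m_def by (rule second_diff[OF assms])
  ultimately show ?thesis by simp
qed

lemma inf_bounds:
  assumes "0 \<le> u" "u < v" "v \<le> 1"
  shows "c1 * ((v - u)/2)^2 / 4 \<le> (INF ab \<in> (UNIV :: (real \<times> real) set). (SUP x \<in> {u..v}. \<bar>f x - fst ab * x - snd ab\<bar>))"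
    and "(INF ab \<in> (UNIV :: (real \<times> real) set). (SUP x \<in> {u..v}. \<bar>f x - fst ab * x - snd ab\<bar>)) \<le> c2 * (v - u)^2"
proof -
  show "c1 * ((v - u)/2)^2 / 4 \<le> (INF ab \<in> (UNIV :: (real \<times> real) set). (SUP x \<in> {u..v}. \<bar>f x - fst ab * x - snd ab\<bar>))"
    by (rule cINF_greatest) (use sup_lower assms in auto)
  have bb: "bdd_below ((\<lambda>ab. SUP x \<in> {u..v}. \<bar>f x - fst ab * x - snd ab\<bar>) ` (UNIV :: (real \<times> real) set))"
    by (rule bdd_belowI[where m = "c1 * ((v - u)/2)^2 / 4"]) (use sup_lower assms in auto)
  have "(INF ab \<in> (UNIV :: (real \<times> real) set). (SUP x \<in> {u..v}. \<bar>f x - fst ab * x - snd ab\<bar>))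
     \<le> (SUP x \<in> {u..v}. \<bar>f x - fst (f' u, f u - f' u * u) * x - snd (f' u, f u - f' u * u)\<bar>)"
    by (rule cINF_lower[OF bb]) simp
  also have "\<dots> \<le> c2 * (v - u)^2"
  proof (rule cSUP_least)
    show "{u..v} \<noteq> {}" using assms by simp
    fix x assume "x \<in> {u..v}"
    thus "\<bar>f x - fst (f' u, f u - f' u * u) * x - snd (f' u, f u - f' u * u)\<bar> \<le> c2 * (v - u)^2"
      using taylor_up[of u v x] assms by (simp add: algebra_simps)
  qed
  finally show "(INF ab \<in> (UNIV :: (real \<times> real) set). (SUP x \<in> {u..v}. \<bar>f x - fst ab * x - snd ab\<bar>)) \<le> c2 * (v - u)^2" .
qed

end

theorem lemma3p3:
  fixes f f' f'' :: "real \<Rightarrow> real" and c1 c2 :: real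
  assumes f': "\<And>x. x \<in> {0..1} \<Longrightarrow> (f has_real_derivative f' x) (at x within {0..1})"
    and f'': "\<And>x. x \<in> {0..1} \<Longrightarrow> (f' has_real_derivative f'' x) (at x within {0..1})"
    and c: "0 < c1" "c1 < c2"
    and bnd: "\<And>x. x \<in> {0..1} \<Longrightarrow> c1 < \<bar>f'' x\<bar> \<and> \<bar>f'' x\<bar> < c2"
  shows "UN_condition f"
proof -
  have contf: "continuous_on {0..1} f"
    unfolding continuous_on_eq_continuous_within using f' DERIV_continuous by blast
  have contf': "continuous_on {0..1} f'"
    unfolding continuous_on_eq_continuous_within using f'' DERIV_continuous by blast
  have Df: "DERIV f x :> f' x" if "0 < x" "x < 1" for x
    using f'[of x] at_within_Icc_at[of 0 x 1] that by simp
  have Df': "DERIV f' x :> f'' x" if "0 < x" "x < 1" for x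
    using f''[of x] at_within_Icc_at[of 0 x 1] that by simp
  define lo where "lo M = c1 / (16 * (real M)^2)" for M :: nat
  define up where "up M = c2 / (real M)^2" for M :: nat
  have bounds: "lo M \<le> lin_err f M k \<and> lin_err f M k \<le> up M" if "0 < M" "k < M" for M k
  proof -
    let ?u = "real k / real M" and ?v = "(real k + 1) / real M"
    have uv: "0 \<le> ?u" "?u < ?v" "?v \<le> 1" using that by (auto simp: divide_simps)
    have d: "?v - ?u = 1 / real M" using that by (simp add: divide_simps)
    have "c1 * ((?v - ?u)/2)^2 / 4 = lo M" unfolding d lo_def by (simp add: power2_eq_square)
    moreover have "c2 * (?v - ?u)^2 = up M" unfolding d up_def by (simp add: power2_eq_square)
    moreover have "c1 * ((?v - ?u)/2)^2 / 4 \<le> lin_err f M k" unfolding lin_err_def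
      by (rule inf_bounds(1)[OF contf contf' Df Df' bnd]) (use uv in auto)
    moreover have "lin_err f M k \<le> c2 * (?v - ?u)^2" unfolding lin_err_def
      by (rule inf_bounds(2)[OF contf contf' Df Df' bnd]) (use uv in auto)
    ultimately show ?thesis by auto
  qed
  define K where "K = 256 * c2^2 / c1^2"
  have "K > 0" using c by (simp add: K_def)
  moreover have "\<forall>\<^sub>F M in sequentially.
        real M * (MAX k \<in> {..<M}. (lin_err f M k)\<^sup>2) \<le> K * (\<Sum>k<M. (lin_err f M k)\<^sup>2)"
  proof (rule eventually_sequentiallyI[of 1])
    fix M :: nat assume M: "1 \<le> M"
    hence M0: "0 < M" by simp
    have lo0: "0 \<le> lo M" using c by (simp add: lo_def)
    have "(MAX k \<in> {..<M}. (lin_err f M k)\<^sup>2) \<le> (up M)^2"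
    proof (rule Max.boundedI)
      show "finite ((\<lambda>k. (lin_err f M k)\<^sup>2) ` {..<M})" by simp
      show "(\<lambda>k. (lin_err f M k)\<^sup>2) ` {..<M} \<noteq> {}" using M0 by auto
      fix a assume "a \<in> (\<lambda>k. (lin_err f M k)\<^sup>2) ` {..<M}"
      then obtain k where "k < M" "a = (lin_err f M k)\<^sup>2" by auto
      thus "a \<le> (up M)^2" using bounds[OF M0, of k] lo0 by (auto intro!: power_mono)
    qed
    hence "real M * (MAX k \<in> {..<M}. (lin_err f M k)\<^sup>2) \<le> real M * (up M)^2"
      by (simp add: mult_left_mono)
    also have "real M * (up M)^2 = K * (real M * (lo M)^2)"
      using c M0 by (simp add: K_def up_def lo_def power2_eq_square field_simps)
    also have "real M * (lo M)^2 = (\<Sum>k<M. (lo M)^2)" by simp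
    also have "(\<Sum>k<M. (lo M)^2) \<le> (\<Sum>k<M. (lin_err f M k)\<^sup>2)"
      by (rule sum_mono) (use bounds[OF M0] lo0 in \<open>auto intro!: power_mono\<close>)
    finally show "real M * (MAX k \<in> {..<M}. (lin_err f M k)\<^sup>2) \<le> K * (\<Sum>k<M. (lin_err f M k)\<^sup>2)"
      using \<open>K > 0\<close> by (simp add: mult_left_mono)
  qed
  ultimately show ?thesis unfolding UN_condition_def by blast
qed

end
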